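(* Let $H_\alpha=-\Delta_\alpha+V$ be the Schrödinger operator with a periodic magnetic potential $\alpha$ and a periodic electric potential $V$ on a periodic graph $\mathcal G$, with $V$ normalized so that $\min_{x\in\mathcal V_*}V_x=\varkappa_+$, and let $n\in\mathbb N$. Then the total bandwidth of $H_\alpha^n$ satisfies $$\mathfrak S(H_\alpha^n)\le n(\operatorname{diam}V+\varkappa_+)^{n-1}\mathfrak S(H_\alpha),$$ $$\mathfrak S(H_\alpha^n)\ge\big|\operatorname{Tr}H_\alpha^n(k_1)-\operatorname{Tr}H_\alpha^n(k_2)\big|\qquad\text{for all }k_1,k_2\in\mathbb T^d.$$
   Context: Let $\Gamma\subset\mathbb R^d$ be a lattice with basis $\mathfrak a_1,\dots,\mathfrak a_d$ and fundamental cell $\Omega=\{\sum_sx_s\mathfrak a_s:(x_s)\in[0,1)^d\}$. Let $\mathcal G=(\mathcal V,\mathcal E)$ be a connected, locally finite, infinite graph embedded in $\mathbb R^d$ (loops, multiple edges allowed), invariant under $\Gamma$-translations, with finite quotient $\mathcal G_*=(\mathcal V_*,\mathcal E_* )$; $\nu=\#\mathcal V_*$. Oriented edges $\mathcal A,\mathcal A_*$; $\underline{\mathbf e}$ inverse; $\varkappa_x$ = number of oriented edges starting at $x$; $\varkappa_+=\max_{\mathcal V_*}\varkappa_x$; $\operatorname{diam}V=\max_{\mathcal V_*}V-\min_{\mathcal V_*}V$. Edge index: $x=x_0+[x]$, $x_0\in\mathcal V\cap\Omega$, $[x]\in\Gamma$ with coordinates $[x]_{\mathbb A}\in\mathbb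 Z^d$; $\tau((x,y))=[y]_{\mathbb A}-[x]_{\mathbb A}$, defined on $\mathcal A_*$. Periodic magnetic potential $\alpha:\mathcal A\to\mathbb R$ ($\alpha(\underline{\mathbf e})=-\alpha(\mathbf e)$, $\Gamma$-invariant); $V$ real $\Gamma$-periodic. $H_\alpha=-\Delta_\alpha+V$, $\Delta_\alpha=\varkappa-A_\alpha$, $(A_\alpha f)_x=\sum_{\mathbf e=(x,y)\in\mathcal A}e^{i\alpha(\mathbf e)}f_y$. Fiber operators $H_\alpha(k)=A_\alpha(k)-\varkappa+V$ on $\mathbb C^\nu$, $(A_\alpha(k)f)_x=\sum_{\mathbf e=(x,y)\in\mathcal A_*}e^{i(\alpha(\mathbf e)+\langle\tau(\mathbf e),k\rangle)}f_y$, $k\in\mathbb T^d=\mathbb R^d/(2\pi\mathbb Z)^d$, eigenvalues $\lambda_{\alpha,1}(k)\le\dots\le\lambda_{\alpha,\nu}(k)$. Bands $\sigma_j(H_\alpha)=\lambda_{\alpha,j}(\mathbb T^d)$ and $\sigma_j(H_\alpha^n)=\{\lambda_{\alpha,j}(k)^n:k\in\mathbb T^d\}$ (so $|\sigma_j(H_\alpha^n)|=\max_k\lambda_{\alpha,j}^n(k)-\min_k\lambda_{\alpha,j}^n(k)$); $\mathfrak S(H_\alpha^n)=\sum_{j=1}^\nu|\sigma_j(H_\alpha^n)|$. *)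

theory Defs
  imports "Jordan_Normal_Form.Char_Poly"
begin

(* Periodic graph G encoded by its finite quotient G_* = (V_*, A_* ) with edge indices.
   Vertices of G_*: 0..<nu.  Oriented edges of G_*: the finite set E :: 'e set.
   src e / tgt e: start/end vertex, einv e: the inverse edge (underline e),
   tau e :: 'd => int : the edge index in Z^d  (d = CARD('d)),
   alpha e : the periodic magnetic potential on e. *)

definition periodic_graph_data ::
  "nat \<Rightarrow> 'e set \<Rightarrow> ('e \<Rightarrow> nat) \<Rightarrow> ('e \<Rightarrow> nat) \<Rightarrow> ('e \<Rightarrow> 'e) \<Rightarrow> ('e \<Rightarrow> 'd \<Rightarrow> int) \<Rightarrow> bool" where
  "periodic_graph_data nu E src tgt einv tau \<longleftrightarrow>
     0 < nu \<and> finite E \<and>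
     (\<forall>e\<in>E. src e < nu \<and> tgt e < nu \<and> einv e \<in> E \<and> einv e \<noteq> e \<and> einv (einv e) = e \<and>
             src (einv e) = tgt e \<and> tgt (einv e) = src e \<and> tau (einv e) = (\<lambda>s. - tau e s))"

fun quot_walk :: "('e \<Rightarrow> nat) \<Rightarrow> ('e \<Rightarrow> nat) \<Rightarrow> 'e set \<Rightarrow> 'e list \<Rightarrow> nat \<Rightarrow> nat \<Rightarrow> bool" where
  "quot_walk src tgt E [] x y \<longleftrightarrow> x = y"
| "quot_walk src tgt E (e # es) x y \<longleftrightarrow> e \<in> E \<and> src e = x \<and> quot_walk src tgt E es (tgt e) y"

(* connectedness of the (infinite) periodic graph G: every vertex x_0 + 0 can be joined
   to every vertex y_0 + m, m in Z^d, i.e. there is a walk in G_* from x_0 to y_0 with total index m *)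
definition periodic_connected ::
  "nat \<Rightarrow> 'e set \<Rightarrow> ('e \<Rightarrow> nat) \<Rightarrow> ('e \<Rightarrow> nat) \<Rightarrow> ('e \<Rightarrow> 'd::finite \<Rightarrow> int) \<Rightarrow> bool" where
  "periodic_connected nu E src tgt tau \<longleftrightarrow>
     (\<forall>x<nu. \<forall>y<nu. \<forall>m::'d \<Rightarrow> int. \<exists>es. quot_walk src tgt E es x y \<and>
         (\<forall>s. (\<Sum>e\<leftarrow>es. tau e s) = m s))"

definition magnetic_potential :: "'e set \<Rightarrow> ('e \<Rightarrow> 'e) \<Rightarrow> ('e \<Rightarrow> real) \<Rightarrow> bool" where
  "magnetic_potential E einv alpha \<longleftrightarrow> (\<forall>e\<in>E. alpha (einv e) = - alpha e)"

definition vdeg :: "'e set \<Rightarrow> ('e \<Rightarrow> nat) \<Rightarrow> nat \<Rightarrow> nat" where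
  "vdeg E src x = card {e\<in>E. src e = x}"

definition kappa_plus :: "nat \<Rightarrow> 'e set \<Rightarrow> ('e \<Rightarrow> nat) \<Rightarrow> nat" where
  "kappa_plus nu E src = Max (vdeg E src ` {..<nu})"

definition diamV :: "nat \<Rightarrow> (nat \<Rightarrow> real) \<Rightarrow> real" where
  "diamV nu V = Max (V ` {..<nu}) - Min (V ` {..<nu})"

(* fiber operator H_alpha(k) = A_alpha(k) - varkappa + V on C^nu *)
definition fiber_op ::
  "nat \<Rightarrow> 'e set \<Rightarrow> ('e \<Rightarrow> nat) \<Rightarrow> ('e \<Rightarrow> nat) \<Rightarrow> ('e \<Rightarrow> 'd::finite \<Rightarrow> int) \<Rightarrow> ('e \<Rightarrow> real)
     \<Rightarrow> (nat \<Rightarrow> real) \<Rightarrow> ('d \<Rightarrow> real) \<Rightarrow> complex mat" where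
  "fiber_op nu E src tgt tau alpha V k = mat nu nu (\<lambda>(x,y).
      (\<Sum>e\<in>{e\<in>E. src e = x \<and> tgt e = y}. cis (alpha e + (\<Sum>s\<in>UNIV. of_int (tau e s) * k s)))
      + (if x = y then complex_of_real (V x - real (vdeg E src x)) else 0))"

definition eigs :: "complex mat \<Rightarrow> real list" where
  "eigs A = sort (map Re (SOME as. char_poly A = (\<Prod>a\<leftarrow>as. [:- a, 1:]) \<and> length as = dim_row A))"

definition mat_trace :: "complex mat \<Rightarrow> complex" where
  "mat_trace A = (\<Sum>i<dim_row A. A $$ (i, i))"

(* lambda_{alpha,j}(k), j = 0..nu-1 (0-indexed) *)
definition band_fun ::
  "nat \<Rightarrow> 'e set \<Rightarrow> ('e \<Rightarrow> nat) \<Rightarrow> ('e \<Rightarrow> nat) \<Rightarrow> ('e \<Rightarrow> 'd::finite \<Rightarrow> int) \<Rightarrow> ('e \<Rightarrow> real)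
     \<Rightarrow> (nat \<Rightarrow> real) \<Rightarrow> nat \<Rightarrow> ('d \<Rightarrow> real) \<Rightarrow> real" where
  "band_fun nu E src tgt tau alpha V j k = eigs (fiber_op nu E src tgt tau alpha V k) ! j"

definition total_bandwidth ::
  "nat \<Rightarrow> 'e set \<Rightarrow> ('e \<Rightarrow> nat) \<Rightarrow> ('e \<Rightarrow> nat) \<Rightarrow> ('e \<Rightarrow> 'd::finite \<Rightarrow> int) \<Rightarrow> ('e \<Rightarrow> real)
     \<Rightarrow> (nat \<Rightarrow> real) \<Rightarrow> nat \<Rightarrow> real" where
  "total_bandwidth nu E src tgt tau alpha V n =
     (\<Sum>j<nu. (SUP k. band_fun nu E src tgt tau alpha V j k ^ n)
             - (INF k. band_fun nu E src tgt tau alpha V j k ^ n))"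

end

theory Submission
  imports Defs "Jordan_Normal_Form.Schur_Decomposition"
begin

lemma sum_single:
  assumes "\<And>b. b \<in> A \<Longrightarrow> b \<noteq> a \<Longrightarrow> g b = 0" "finite A" "a \<in> A"
  shows "sum g A = g a"
proof -
  have "sum g A = g a + sum g (A - {a})" using assms by (simp add: sum.remove)
  also have "sum g (A - {a}) = 0" using assms by (intro sum.neutral) auto
  finally show ?thesis by simp
qed

lemma sum_list_sort: fixes f :: "'a::linorder \<Rightarrow> 'b::comm_monoid_add" shows "sum_list (map f (sort xs)) = sum_list (map f xs)"
proof -
  have "mset (map f (sort xs)) = mset (map f xs)" by simp
  then show ?thesis by (metis sum_mset_sum_list)
qed

lemma mat_trace_alt: "A \<in> carrier_mat n n \<Longrightarrow> mat_trace A = (\<Sum>i<n. A $$ (i,i))"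
  by (simp add: mat_trace_def)

lemma mat_trace_mult_comm:
  assumes A: "A \<in> carrier_mat n n" and B: "B \<in> carrier_mat n n"
  shows "mat_trace (A * B) = mat_trace (B * A)"
proof -
  have "mat_trace (A*B) = (\<Sum>i<n. \<Sum>k<n. A $$ (i,k) * B $$ (k,i))"
    using A B by (simp add: mat_trace_def scalar_prod_def atLeast0LessThan)
  also have "\<dots> = (\<Sum>k<n. \<Sum>i<n. B $$ (k,i) * A $$ (i,k))"
    by (subst sum.swap) (simp add: mult.commute)
  also have "\<dots> = mat_trace (B*A)"
    using A B by (simp add: mat_trace_def scalar_prod_def atLeast0LessThan)
  finally show ?thesis .
qed

lemma upper_tri_mult:
  assumes A: "A \<in> carrier_mat n n" and B: "B \<in> carrier_mat n n"
    and uA: "upper_triangular A" and uB: "upper_triangular B"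
  shows "upper_triangular (A * B) \<and> (\<forall>i<n. (A*B) $$ (i,i) = A $$ (i,i) * B $$ (i,i))"
proof (intro conjI allI impI)
  show "upper_triangular (A * B)"
  proof
    fix i j assume ji: "j < i" and i: "i < dim_row (A*B)"
    have "(A*B) $$ (i,j) = (\<Sum>k\<in>{0..<n}. A $$ (i,k) * B $$ (k,j))"
      using A B ji i by (simp add: scalar_prod_def)
    also have "\<dots> = 0"
    proof (rule sum.neutral, intro ballI)
      fix k assume "k \<in> {0..<n}"
      show "A $$ (i,k) * B $$ (k,j) = 0"
      proof (cases "k < i")
        case True then show ?thesis using upper_triangularD[OF uA True] A i by simp
      next
        case False then have "j < k" using ji by auto
        then show ?thesis using upper_triangularD[OF uB \<open>j < k\<close>] B \<open>k \<in> {0..<n}\<close> by simp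
      qed
    qed
    finally show "(A*B) $$ (i,j) = 0" .
  qed
next
  fix i assume i: "i < n"
  have "(A*B) $$ (i,i) = (\<Sum>k\<in>{0..<n}. A $$ (i,k) * B $$ (k,i))"
    using A B i by (simp add: scalar_prod_def)
  also have "\<dots> = A $$ (i,i) * B $$ (i,i)"
  proof (rule sum_single)
    fix k assume k: "k \<in> {0..<n}" "k \<noteq> i"
    show "A $$ (i,k) * B $$ (k,i) = 0"
    proof (cases "k < i")
      case True then show ?thesis using upper_triangularD[OF uA True] A i by simp
    next
      case False then have "i < k" using k by auto
      then show ?thesis using upper_triangularD[OF uB \<open>i < k\<close>] B k by simp
    qed
  qed (use i in auto)
  finally show "(A*B) $$ (i,i) = A $$ (i,i) * B $$ (i,i)" .
qed

lemma upper_tri_pow: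
  assumes B: "B \<in> carrier_mat n n" and uB: "upper_triangular B"
  shows "upper_triangular (B ^\<^sub>m k) \<and> (\<forall>i<n. (B ^\<^sub>m k) $$ (i,i) = B $$ (i,i) ^ k)"
proof (induction k)
  case 0
  then show ?case using B by auto
next
  case (Suc k)
  have "B ^\<^sub>m k \<in> carrier_mat n n" using B by simp
  from upper_tri_mult[OF this B] Suc uB show ?case by (auto simp del: power_Suc simp add: power_Suc2)
qed

lemma trace_pow_eigs:
  fixes A :: "complex mat"
  assumes A: "A \<in> carrier_mat n n"
    and c: "char_poly A = (\<Prod>a\<leftarrow>es. [:- a, 1:])"
  shows "mat_trace (A ^\<^sub>m k) = sum_list (map (\<lambda>a. a ^ k) es)"
proof -
  obtain B P Q where sd: "schur_decomposition A es = (B,P,Q)"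
    by (cases "schur_decomposition A es") auto
  from schur_decomposition[OF A c sd]
  have w: "similar_mat_wit A B P Q" and uB: "upper_triangular B" and dB: "diag_mat B = es"
    by auto
  from w A have car: "B \<in> carrier_mat n n" "P \<in> carrier_mat n n" "Q \<in> carrier_mat n n"
    and QP: "Q * P = 1\<^sub>m n"
    unfolding similar_mat_wit_def Let_def by auto
  have Ak: "A ^\<^sub>m k = P * B ^\<^sub>m k * Q" by (rule similar_mat_wit_pow_id[OF w])
  have Bk: "B ^\<^sub>m k \<in> carrier_mat n n" using car by simp
  have "mat_trace (A ^\<^sub>m k) = mat_trace ((P * B ^\<^sub>m k) * Q)" using Ak by simp
  also have "\<dots> = mat_trace (Q * (P * B ^\<^sub>m k))"
    by (rule mat_trace_mult_comm[of _ n]) (use car Bk in auto)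
  also have "Q * (P * B ^\<^sub>m k) = (Q * P) * B ^\<^sub>m k"
    using assoc_mult_mat[OF car(3) car(2) Bk] by simp
  also have "\<dots> = B ^\<^sub>m k" using QP left_mult_one_mat[OF Bk] by simp
  also have "mat_trace (B ^\<^sub>m k) = (\<Sum>i<n. B $$ (i,i) ^ k)"
    using upper_tri_pow[OF car(1) uB, of k] Bk by (simp add: mat_trace_alt)
  also have "\<dots> = sum_list (map (\<lambda>a. a ^ k) (diag_mat B))"
    using car by (simp add: diag_mat_def interv_sum_list_conv_sum_set_nat atLeast0LessThan)
  finally show ?thesis using dB by simp
qed

lemma eig_disc:
  fixes A :: "complex mat"
  assumes A: "A \<in> carrier_mat n n" and ev: "eigenvector A v a"
    and rb: "\<And>x. x < n \<Longrightarrow> (\<Sum>y<n. cmod (A $$ (x,y) - (if x = y then c x else 0))) \<le> r x"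
  shows "\<exists>x<n. cmod (a - c x) \<le> r x"
proof -
  from ev A have v: "v \<in> carrier_vec n" and v0: "v \<noteq> 0\<^sub>v n" and Av: "A *\<^sub>v v = a \<cdot>\<^sub>v v"
    unfolding eigenvector_def by auto
  have "\<exists>i<n. v $ i \<noteq> 0"
  proof (rule ccontr)
    assume "\<not> ?thesis"
    then have "v = 0\<^sub>v n" using v by (intro eq_vecI) auto
    with v0 show False by simp
  qed
  then have n0: "{..<n} \<noteq> {}" by auto
  define m where "m = Max ((\<lambda>i. cmod (v $ i)) ` {..<n})"
  have "m \<in> (\<lambda>i. cmod (v $ i)) ` {..<n}" unfolding m_def using n0 by (intro Max_in) auto
  then obtain x where x: "x < n" and mx: "m = cmod (v $ x)" by auto
  have le: "cmod (v $ y) \<le> cmod (v $ x)" if "y < n" for y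
    using that unfolding mx[symmetric] m_def by (intro Max_ge) auto
  have vx: "v $ x \<noteq> 0"
  proof
    assume "v $ x = 0"
    with le have "\<forall>y<n. v $ y = 0" by fastforce
    with \<open>\<exists>i<n. v $ i \<noteq> 0\<close> show False by blast
  qed
  have "(A *\<^sub>v v) $ x = (\<Sum>y<n. A $$ (x,y) * v $ y)"
    using A v x by (simp add: scalar_prod_def atLeast0LessThan mult.commute)
  then have eq: "a * v $ x = (\<Sum>y<n. A $$ (x,y) * v $ y)"
    using Av x v by simp
  have "(\<Sum>y<n. (A $$ (x,y) - (if x = y then c x else 0)) * v $ y)
        = (\<Sum>y<n. A $$ (x,y) * v $ y) - (\<Sum>y<n. (if x = y then c x else 0) * v $ y)"
    by (simp add: algebra_simps sum_subtractf)
  also have "(\<Sum>y<n. (if x = y then c x else 0) * v $ y) = c x * v $ x"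
    using x by (subst sum_single[where a=x]) auto
  finally have eq2: "(a - c x) * v $ x = (\<Sum>y<n. (A $$ (x,y) - (if x = y then c x else 0)) * v $ y)"
    using eq by (simp add: algebra_simps)
  have "cmod (a - c x) * cmod (v $ x) = cmod (\<Sum>y<n. (A $$ (x,y) - (if x = y then c x else 0)) * v $ y)"
    using eq2 by (metis norm_mult)
  also have "\<dots> \<le> (\<Sum>y<n. cmod (A $$ (x,y) - (if x = y then c x else 0)) * cmod (v $ y))"
    by (rule order_trans[OF norm_sum]) (simp add: norm_mult)
  also have "\<dots> \<le> (\<Sum>y<n. cmod (A $$ (x,y) - (if x = y then c x else 0)) * cmod (v $ x))"
    by (intro sum_mono mult_left_mono le) auto
  also have "\<dots> = (\<Sum>y<n. cmod (A $$ (x,y) - (if x = y then c x else 0))) * cmod (v $ x)"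
    by (simp add: sum_distrib_right)
  also have "\<dots> \<le> r x * cmod (v $ x)"
    by (intro mult_right_mono rb x) auto
  finally have "cmod (a - c x) * cmod (v $ x) \<le> r x * cmod (v $ x)" .
  then have "cmod (a - c x) \<le> r x" using vx by simp
  with x show ?thesis by blast
qed

lemma hermitian_eig_real:
  fixes A :: "complex mat"
  assumes A: "A \<in> carrier_mat n n" and ev: "eigenvector A v a"
    and herm: "\<And>i j. i < n \<Longrightarrow> j < n \<Longrightarrow> A $$ (j,i) = cnj (A $$ (i,j))"
  shows "Im a = 0"
proof -
  from ev A have v: "v \<in> carrier_vec n" and v0: "v \<noteq> 0\<^sub>v n" and Av: "A *\<^sub>v v = a \<cdot>\<^sub>v v"
    unfolding eigenvector_def by auto
  obtain i0 where i0: "i0 < n" "v $ i0 \<noteq> 0"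
  proof (rule ccontr)
    assume "\<not> thesis"
    then have "v = 0\<^sub>v n" using v that by (intro eq_vecI) auto
    with v0 show False by simp
  qed
  define S where "S = (\<Sum>i<n. \<Sum>j<n. cnj (v $ i) * A $$ (i,j) * v $ j)"
  define N where "N = (\<Sum>i<n. (cmod (v $ i))\<^sup>2)"
  have Npos: "N > 0" unfolding N_def
    by (rule sum_pos2[of _ i0]) (use i0 in auto)
  have rowi: "(\<Sum>j<n. A $$ (i,j) * v $ j) = a * v $ i" if "i < n" for i
  proof -
    have "(A *\<^sub>v v) $ i = (\<Sum>j<n. A $$ (i,j) * v $ j)"
      using A v that by (simp add: scalar_prod_def atLeast0LessThan mult.commute)
    then show ?thesis using Av that v by simp
  qed
  have "S = (\<Sum>i<n. cnj (v $ i) * (\<Sum>j<n. A $$ (i,j) * v $ j))"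
    unfolding S_def by (simp add: sum_distrib_left mult.assoc)
  also have "\<dots> = (\<Sum>i<n. a * (cnj (v $ i) * v $ i))"
    by (intro sum.cong refl) (simp add: rowi)
  also have "\<dots> = a * complex_of_real N"
  proof -
    have "complex_of_real N = (\<Sum>i<n. cnj (v $ i) * v $ i)"
      unfolding N_def of_real_sum by (intro sum.cong refl) (metis complex_norm_square mult.commute of_real_power)
    then show ?thesis by (simp add: sum_distrib_left)
  qed
  finally have SaN: "S = a * complex_of_real N" .
  have "cnj S = (\<Sum>i<n. \<Sum>j<n. v $ i * cnj (A $$ (i,j)) * cnj (v $ j))"
    unfolding S_def by simp
  also have "\<dots> = (\<Sum>i<n. \<Sum>j<n. cnj (v $ j) * A $$ (j,i) * v $ i)"
  proof (intro sum.cong refl)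
    fix i j assume ij: "i \<in> {..<n}" "j \<in> {..<n}"
    then have "A $$ (j,i) = cnj (A $$ (i,j))" by (intro herm) auto
    then show "v $ i * cnj (A $$ (i,j)) * cnj (v $ j) = cnj (v $ j) * A $$ (j,i) * v $ i"
      by (simp add: mult_ac)
  qed
  also have "\<dots> = S" unfolding S_def by (rule sum.swap)
  finally have "cnj S = S" .
  then have "cnj a * complex_of_real N = a * complex_of_real N" using SaN by simp
  then have "cnj a = a" using Npos by simp
  then show ?thesis by (metis Reals_cnj_iff complex_is_Real_iff)
qed

definition Aent :: "'e set \<Rightarrow> ('e \<Rightarrow> nat) \<Rightarrow> ('e \<Rightarrow> nat) \<Rightarrow> ('e \<Rightarrow> 'd::finite \<Rightarrow> int) \<Rightarrow> ('e \<Rightarrow> real)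
     \<Rightarrow> ('d \<Rightarrow> real) \<Rightarrow> nat \<Rightarrow> nat \<Rightarrow> complex" where
  "Aent E src tgt tau alpha k x y =
    (\<Sum>e\<in>{e\<in>E. src e = x \<and> tgt e = y}. cis (alpha e + (\<Sum>s\<in>UNIV. of_int (tau e s) * k s)))"

lemma fiber_carrier: "fiber_op nu E src tgt tau alpha V k \<in> carrier_mat nu nu"
  by (simp add: fiber_op_def)

lemma fiber_entry: "x < nu \<Longrightarrow> y < nu \<Longrightarrow> fiber_op nu E src tgt tau alpha V k $$ (x,y) =
   Aent E src tgt tau alpha k x y + (if x = y then complex_of_real (V x - real (vdeg E src x)) else 0)"
  by (simp add: fiber_op_def Aent_def)

lemma Aent_herm:
  assumes pg: "periodic_graph_data nu E src tgt einv tau" and mp: "magnetic_potential E einv alpha"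
  shows "Aent E src tgt tau alpha k y x = cnj (Aent E src tgt tau alpha k x y)"
proof -
  let ?S = "\<lambda>x y. {e\<in>E. src e = x \<and> tgt e = y}"
  let ?th = "\<lambda>e. alpha e + (\<Sum>s\<in>UNIV. of_int (tau e s) * k s)"
  have inv: "\<And>e. e \<in> E \<Longrightarrow> einv e \<in> E \<and> einv (einv e) = e \<and> src (einv e) = tgt e \<and> tgt (einv e) = src e
      \<and> tau (einv e) = (\<lambda>s. - tau e s) \<and> alpha (einv e) = - alpha e"
    using pg mp unfolding periodic_graph_data_def magnetic_potential_def by auto
  have bij: "bij_betw einv (?S x y) (?S y x)"
    by (rule bij_betw_byWitness[where f' = einv]) (auto dest: inv)
  have th: "?th (einv e) = - ?th e" if "e \<in> E" for e
    using inv[OF that] by (simp add: sum_negf)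
  have "cnj (Aent E src tgt tau alpha k x y) = (\<Sum>e\<in>?S x y. cis (?th (einv e)))"
    unfolding Aent_def cnj_sum by (intro sum.cong refl) (simp add: cis_cnj th)
  also have "\<dots> = (\<Sum>e\<in>?S y x. cis (?th e))"
    by (rule sum.reindex_bij_betw[OF bij, where g = "\<lambda>e. cis (?th e)"])
  finally show ?thesis unfolding Aent_def by simp
qed

lemma fiber_herm:
  assumes pg: "periodic_graph_data nu E src tgt einv tau" and mp: "magnetic_potential E einv alpha"
    and x: "x < nu" and y: "y < nu"
  shows "fiber_op nu E src tgt tau alpha V k $$ (y,x) = cnj (fiber_op nu E src tgt tau alpha V k $$ (x,y))"
  using Aent_herm[OF pg mp, of k y x] x y by (simp add: fiber_entry)

lemma fiber_rowsum:
  assumes pg: "periodic_graph_data nu E src tgt einv tau" and x: "x < nu"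
  shows "(\<Sum>y<nu. cmod (fiber_op nu E src tgt tau alpha V k $$ (x,y)
            - (if x = y then complex_of_real (V x - real (vdeg E src x)) else 0))) \<le> real (vdeg E src x)"
proof -
  let ?S = "\<lambda>y. {e\<in>E. src e = x \<and> tgt e = y}"
  have fin: "finite E" and tg: "\<And>e. e \<in> E \<Longrightarrow> tgt e < nu"
    using pg unfolding periodic_graph_data_def by auto
  have "(\<Sum>y<nu. cmod (fiber_op nu E src tgt tau alpha V k $$ (x,y)
            - (if x = y then complex_of_real (V x - real (vdeg E src x)) else 0)))
       = (\<Sum>y<nu. cmod (Aent E src tgt tau alpha k x y))"
    using x by (intro sum.cong refl) (simp add: fiber_entry)
  also have "\<dots> \<le> (\<Sum>y<nu. real (card (?S y)))"
  proof (intro sum_mono)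
    fix y
    have "cmod (Aent E src tgt tau alpha k x y) \<le> (\<Sum>e\<in>?S y. cmod (cis (alpha e + (\<Sum>s\<in>UNIV. of_int (tau e s) * k s))))"
      unfolding Aent_def by (rule norm_sum)
    also have "\<dots> = real (card (?S y))" by simp
    finally show "cmod (Aent E src tgt tau alpha k x y) \<le> real (card (?S y))" .
  qed
  also have "(\<Sum>y<nu. real (card (?S y))) = real (card (\<Union>y<nu. ?S y))"
    by (subst card_UN_disjoint) (use fin in auto)
  also have "(\<Union>y<nu. ?S y) = {e\<in>E. src e = x}" using tg by auto
  finally show ?thesis by (simp add: vdeg_def)
qed

lemma pow_diff_bound:
  fixes x y M :: real
  assumes x: "\<bar>x\<bar> \<le> M" and y: "\<bar>y\<bar> \<le> M"
  shows "\<bar>x ^ n - y ^ n\<bar> \<le> real n * M ^ (n - 1) * \<bar>x - y\<bar>"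
proof (induction n)
  case 0 then show ?case by simp
next
  case (Suc n)
  have M0: "0 \<le> M" using x by linarith
  have "x ^ Suc n - y ^ Suc n = x * (x ^ n - y ^ n) + (x - y) * y ^ n"
    by (simp add: algebra_simps)
  then have "\<bar>x ^ Suc n - y ^ Suc n\<bar> \<le> \<bar>x\<bar> * \<bar>x ^ n - y ^ n\<bar> + \<bar>x - y\<bar> * \<bar>y\<bar> ^ n"
    by (metis abs_mult abs_triangle_ineq power_abs)
  also have "\<dots> \<le> M * (real n * M ^ (n - 1) * \<bar>x - y\<bar>) + \<bar>x - y\<bar> * M ^ n"
    by (intro add_mono mult_mono Suc.IH x power_mono y mult_left_mono) (use M0 in auto)
  also have "M * (real n * M ^ (n - 1)) = real n * M ^ n" by (cases n) auto
  then have "M * (real n * M ^ (n - 1) * \<bar>x - y\<bar>) + \<bar>x - y\<bar> * M ^ n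
      = real (Suc n) * M ^ (Suc n - 1) * \<bar>x - y\<bar>"
    by (simp add: algebra_simps) (metis mult.assoc mult.commute)
  finally show ?case .
qed

lemma eig_props:
  assumes pg: "periodic_graph_data nu E src tgt einv tau"
    and mp: "magnetic_potential E einv alpha"
    and mV: "Min (V ` {..<nu}) = real (kappa_plus nu E src)"
    and cp: "char_poly (fiber_op nu E src tgt tau alpha V k) = (\<Prod>a\<leftarrow>es. [:- a, 1:])"
    and a: "a \<in> set es"
  shows "Im a = 0 \<and> \<bar>Re a\<bar> \<le> diamV nu V + real (kappa_plus nu E src)"
proof -
  let ?H = "fiber_op nu E src tgt tau alpha V k"
  have Hc: "?H \<in> carrier_mat nu nu" by (rule fiber_carrier)
  have nu0: "0 < nu" and fin: "finite E" using pg unfolding periodic_graph_data_def by auto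
  have "poly (char_poly ?H) a = 0" unfolding cp using a
    by (simp add: poly_prod_list prod_list_zero_iff)
  then have "eigenvalue ?H a" using eigenvalue_root_char_poly[OF Hc] by simp
  then obtain v where v: "eigenvector ?H v a" unfolding eigenvalue_def by blast
  have Im: "Im a = 0"
    by (rule hermitian_eig_real[OF Hc v]) (rule fiber_herm[OF pg mp])
  obtain x where x: "x < nu"
    and d: "cmod (a - complex_of_real (V x - real (vdeg E src x))) \<le> real (vdeg E src x)"
    using eig_disc[OF Hc v, of "\<lambda>x. complex_of_real (V x - real (vdeg E src x))" "\<lambda>x. real (vdeg E src x)"]
      fiber_rowsum[OF pg] by blast
  have "\<bar>Re a - (V x - real (vdeg E src x))\<bar> \<le> real (vdeg E src x)"
    using abs_Re_le_cmod[of "a - complex_of_real (V x - real (vdeg E src x))"] d by simp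
  then have lo: "V x - 2 * real (vdeg E src x) \<le> Re a" and hi: "Re a \<le> V x" by linarith+
  have kp: "vdeg E src x \<le> kappa_plus nu E src"
    unfolding kappa_plus_def using x by (intro Max_ge) auto
  have Vmax: "V x \<le> Max (V ` {..<nu})" using x by (intro Max_ge) auto
  have Vmin: "Min (V ` {..<nu}) \<le> V x" using x by (intro Min_le) auto
  have "\<bar>Re a\<bar> \<le> Max (V ` {..<nu})"
    using lo hi kp Vmax Vmin mV by linarith
  then show ?thesis using Im mV unfolding diamV_def by simp
qed

theorem lemma4p2:
  fixes nu :: nat and E :: "'e set" and src tgt :: "'e \<Rightarrow> nat" and einv :: "'e \<Rightarrow> 'e"
    and tau :: "'e \<Rightarrow> 'd::finite \<Rightarrow> int" and alpha :: "'e \<Rightarrow> real" and V :: "nat \<Rightarrow> real"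
    and n :: nat
  assumes "periodic_graph_data nu E src tgt einv tau"
    and "periodic_connected nu E src tgt tau"
    and "magnetic_potential E einv alpha"
    and "Min (V ` {..<nu}) = real (kappa_plus nu E src)"
  shows "(total_bandwidth nu E src tgt tau alpha V n
           \<le> real n * (diamV nu V + real (kappa_plus nu E src)) ^ (n - 1)
               * total_bandwidth nu E src tgt tau alpha V 1)
         \<and> (\<forall>k1 k2 :: 'd \<Rightarrow> real.
           cmod (mat_trace (fiber_op nu E src tgt tau alpha V k1 ^\<^sub>m n)
                 - mat_trace (fiber_op nu E src tgt tau alpha V k2 ^\<^sub>m n))
           \<le> total_bandwidth nu E src tgt tau alpha V n)"
proof -
  note pg = assms(1) and mp = assms(3) and mV = assms(4)
  define H where "H k = fiber_op nu E src tgt tau alpha V k" for k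
  define es where "es k = (SOME as. char_poly (H k) = (\<Prod>a\<leftarrow>as. [:- a, 1:]) \<and> length as = dim_row (H k))" for k
  define M where "M = diamV nu V + real (kappa_plus nu E src)"
  define f where "f j k = band_fun nu E src tgt tau alpha V j k" for j k
  have nu0: "0 < nu" using pg unfolding periodic_graph_data_def by auto
  have Hc: "H k \<in> carrier_mat nu nu" for k unfolding H_def by (rule fiber_carrier)
  have es: "char_poly (H k) = (\<Prod>a\<leftarrow>es k. [:- a, 1:]) \<and> length (es k) = nu" for k
  proof -
    from char_poly_factorized[OF Hc[of k]] obtain as where
      "char_poly (H k) = (\<Prod>a\<leftarrow>as. [:- a, 1:]) \<and> length as = dim_row (H k)"
      using Hc[of k] by auto
    then have "char_poly (H k) = (\<Prod>a\<leftarrow>es k. [:- a, 1:]) \<and> length (es k) = dim_row (H k)"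
      unfolding es_def by (rule someI)
    then show ?thesis using Hc[of k] by simp
  qed
  have ev: "Im a = 0 \<and> \<bar>Re a\<bar> \<le> M" if "a \<in> set (es k)" for a k
    using eig_props[OF pg mp mV _ that] es[of k] unfolding M_def H_def by blast
  have eigsH: "eigs (H k) = sort (map Re (es k))" for k
    unfolding eigs_def es_def by simp
  have leig: "length (eigs (H k)) = nu" for k using eigsH es by simp
  have fH: "f j k = eigs (H k) ! j" for j k unfolding f_def band_fun_def H_def by simp
  have fb: "\<bar>f j k\<bar> \<le> M" if "j < nu" for j k
  proof -
    have "f j k \<in> set (eigs (H k))" unfolding fH using that leig by simp
    then obtain a where "a \<in> set (es k)" "f j k = Re a" unfolding eigsH by auto
    then show ?thesis using ev by auto
  qed
  have M0: "0 \<le> M" using fb[OF nu0] by (meson abs_ge_zero order_trans)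
  have tr: "mat_trace (H k ^\<^sub>m n) = complex_of_real (\<Sum>j<nu. f j k ^ n)" for k
  proof -
    have "mat_trace (H k ^\<^sub>m n) = sum_list (map (\<lambda>a. a ^ n) (es k))"
      using trace_pow_eigs[OF Hc] es by blast
    also have "map (\<lambda>a. a ^ n) (es k) = map (\<lambda>a. complex_of_real (Re a ^ n)) (es k)"
    proof (rule map_cong[OF refl])
      fix a assume "a \<in> set (es k)"
      then have "a = complex_of_real (Re a)" using ev by (simp add: complex_eq_iff)
      then show "a ^ n = complex_of_real (Re a ^ n)" by (metis of_real_power)
    qed
    also have "sum_list \<dots> = complex_of_real (sum_list (map (\<lambda>r. r ^ n) (map Re (es k))))"
      by (simp add: sum_list_of_real[symmetric] o_def)
    also have "sum_list (map (\<lambda>r. r ^ n) (map Re (es k))) = sum_list (map (\<lambda>r. r ^ n) (eigs (H k)))"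
      unfolding eigsH sum_list_sort by simp
    also have "\<dots> = (\<Sum>j<nu. f j k ^ n)"
      by (simp add: sum_list_sum_nth leig fH atLeast0LessThan)
    finally show ?thesis .
  qed
  define g where "g j m = (SUP k. f j k ^ m) - (INF k. f j k ^ m)" for j m
  have TB: "total_bandwidth nu E src tgt tau alpha V m = (\<Sum>j<nu. g j m)" for m
    unfolding total_bandwidth_def g_def f_def by simp
  have bdd: "bdd_above (range (\<lambda>k. f j k ^ m)) \<and> bdd_below (range (\<lambda>k. f j k ^ m))" if "j < nu" for j m
  proof -
    have a: "\<bar>f j k ^ m\<bar> \<le> M ^ m" for k
      using power_mono[OF fb[OF that] abs_ge_zero, of k m] by (simp add: power_abs)
    have b1: "f j k ^ m \<le> M ^ m" for k using abs_le_D1[OF a[of k]] .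
    have b2: "- (M ^ m) \<le> f j k ^ m" for k using abs_le_D2[OF a[of k]] by linarith
    have "bdd_above (range (\<lambda>k. f j k ^ m))" by (rule bdd_aboveI2[where M="M ^ m"]) (rule b1)
    moreover have "bdd_below (range (\<lambda>k. f j k ^ m))" by (rule bdd_belowI2[where m="- (M ^ m)"]) (rule b2)
    ultimately show ?thesis ..
  qed
  have gb: "\<bar>f j k1 ^ m - f j k2 ^ m\<bar> \<le> g j m" if "j < nu" for j m k1 k2
  proof -
    have "f j k1 ^ m \<le> (SUP k. f j k ^ m)" "f j k2 ^ m \<le> (SUP k. f j k ^ m)"
      "(INF k. f j k ^ m) \<le> f j k1 ^ m" "(INF k. f j k ^ m) \<le> f j k2 ^ m"
      using cSUP_upper[OF UNIV_I conjunct1[OF bdd[OF that, of m]]]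
        cINF_lower[OF conjunct2[OF bdd[OF that, of m]] UNIV_I] by auto
    then show ?thesis unfolding g_def by linarith
  qed
  have part1: "g j n \<le> real n * M ^ (n - 1) * g j 1" if j: "j < nu" for j
  proof -
    define C where "C = real n * M ^ (n - 1) * g j 1"
    have step: "f j k1 ^ n \<le> f j k2 ^ n + C" for k1 k2
    proof -
      have "\<bar>f j k1 ^ n - f j k2 ^ n\<bar> \<le> real n * M ^ (n - 1) * \<bar>f j k1 - f j k2\<bar>"
        by (rule pow_diff_bound[OF fb[OF j] fb[OF j]])
      also have "\<dots> \<le> C" unfolding C_def
        using gb[OF j, where m=1] M0 by (intro mult_left_mono) auto
      finally show ?thesis by linarith
    qed
    have S: "(SUP k. f j k ^ n) \<le> f j k2 ^ n + C" for k2
      by (rule cSUP_least) (simp_all add: step)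
    have "(SUP k. f j k ^ n) - C \<le> (INF k. f j k ^ n)"
    proof (rule cINF_greatest)
      show "UNIV \<noteq> {}" by simp
      fix k show "(SUP k. f j k ^ n) - C \<le> f j k ^ n" using S[of k] by linarith
    qed
    then show ?thesis unfolding g_def C_def by linarith
  qed
  show ?thesis
  proof (intro conjI allI)
    show "total_bandwidth nu E src tgt tau alpha V n
           \<le> real n * (diamV nu V + real (kappa_plus nu E src)) ^ (n - 1)
               * total_bandwidth nu E src tgt tau alpha V 1"
      unfolding TB M_def[symmetric] sum_distrib_left by (intro sum_mono part1) auto
  next
    fix k1 k2 :: "'d \<Rightarrow> real"
    have "cmod (mat_trace (fiber_op nu E src tgt tau alpha V k1 ^\<^sub>m n)
                 - mat_trace (fiber_op nu E src tgt tau alpha V k2 ^\<^sub>m n))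
          = \<bar>\<Sum>j<nu. f j k1 ^ n - f j k2 ^ n\<bar>"
    proof -
      have "cmod (mat_trace (fiber_op nu E src tgt tau alpha V k1 ^\<^sub>m n)
                 - mat_trace (fiber_op nu E src tgt tau alpha V k2 ^\<^sub>m n))
          = cmod (complex_of_real (\<Sum>j<nu. f j k1 ^ n) - complex_of_real (\<Sum>j<nu. f j k2 ^ n))"
        unfolding H_def[symmetric] tr by (rule refl)
      also have "\<dots> = cmod (complex_of_real ((\<Sum>j<nu. f j k1 ^ n) - (\<Sum>j<nu. f j k2 ^ n)))"
        by (simp only: of_real_diff)
      also have "\<dots> = \<bar>(\<Sum>j<nu. f j k1 ^ n) - (\<Sum>j<nu. f j k2 ^ n)\<bar>"
        by (rule norm_of_real)
      also have "\<dots> = \<bar>\<Sum>j<nu. f j k1 ^ n - f j k2 ^ n\<bar>"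
        by (simp only: sum_subtractf)
      finally show ?thesis .
    qed
    also have "\<dots> \<le> (\<Sum>j<nu. \<bar>f j k1 ^ n - f j k2 ^ n\<bar>)" by (rule sum_abs)
    also have "\<dots> \<le> (\<Sum>j<nu. g j n)" by (rule sum_mono) (rule gb, simp)
    finally show "cmod (mat_trace (fiber_op nu E src tgt tau alpha V k1 ^\<^sub>m n)
                 - mat_trace (fiber_op nu E src tgt tau alpha V k2 ^\<^sub>m n))
           \<le> total_bandwidth nu E src tgt tau alpha V n" unfolding TB .
  qed
qed

end
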